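(* Let $n\ge2$, and let $\mathcal K\subseteq\mathbb C^n$ be a subset such that for every $V\in\mathcal Z_n$ the set $\mathcal K\cap P^{-1}(V)$ has exactly one element; let $K:=(P|_{\mathcal K})^{-1}:\mathcal Z_n\to\mathbb C^n$. Then $K$ is continuous from $(\mathcal Z_n,d_F)$ to $(\mathbb C^n,d_\infty)$ if and only if $\mathcal K$ is closed in $(\mathbb C^n,d_\infty)$.
   Context: $\mathcal Z_n$ denotes the family of all multisets of complex numbers with exactly $n$ elements counted with multiplicity, with metric $d_F(U,V):=\min_{\tau\in\Pi_n}\max_{1\le j\le n}|u_j-v_{\tau(j)}|$ for $U=\{u_1,\dots,u_n\}$, $V=\{v_1,\dots,v_n\}$, where $\Pi_n$ is the set of permutations of $\{1,\dots,n\}$. $\mathbb C^n$ carries the metric $d_\infty(\mathbf u,\mathbf v)=\max_j|u_j-v_j|$. The map $P:\mathbb C^n\to\mathcal Z_n$ sends $(v_1,\dots,v_n)$ to the multiset $\{v_1,\dots,v_n\}$ (with multiplicities). *)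

theory Defs
  imports "HOL-Analysis.Analysis" "HOL-Library.Multiset" "HOL-Combinatorics.Permutations"
begin

definition Cn :: "nat \<Rightarrow> complex list set" where
  "Cn n = {v. length v = n}"

definition Zn :: "nat \<Rightarrow> complex multiset set" where
  "Zn n = {U. size U = n}"

definition dinf :: "complex list \<Rightarrow> complex list \<Rightarrow> real" where
  "dinf u v = (MAX j\<in>{..<length u}. cmod (u ! j - v ! j))"

definition P :: "complex list \<Rightarrow> complex multiset" where
  "P v = mset v"

definition enum :: "complex multiset \<Rightarrow> complex list" where
  "enum U = (SOME u. mset u = U)"

definition dF :: "nat \<Rightarrow> complex multiset \<Rightarrow> complex multiset \<Rightarrow> real" where
  "dF n U V = (MIN \<tau>\<in>{\<tau>. \<tau> permutes {..<n}}. MAX j\<in>{..<n}. cmod (enum U ! j - enum V ! \<tau> j))"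

definition metric_continuous ::
  "'a set \<Rightarrow> ('a \<Rightarrow> 'a \<Rightarrow> real) \<Rightarrow> 'b set \<Rightarrow> ('b \<Rightarrow> 'b \<Rightarrow> real) \<Rightarrow> ('a \<Rightarrow> 'b) \<Rightarrow> bool" where
  "metric_continuous A dA B dB f \<longleftrightarrow>
     (\<forall>x\<in>A. f x \<in> B) \<and>
     (\<forall>x\<in>A. \<forall>\<epsilon>>0. \<exists>\<delta>>0. \<forall>y\<in>A. dA x y < \<delta> \<longrightarrow> dB (f x) (f y) < \<epsilon>)"

definition metric_closed :: "'a set \<Rightarrow> ('a \<Rightarrow> 'a \<Rightarrow> real) \<Rightarrow> 'a set \<Rightarrow> bool" where
  "metric_closed A d S \<longleftrightarrow> S \<subseteq> A \<and>
     (\<forall>x\<in>A - S. \<exists>\<epsilon>>0. \<forall>y\<in>A. d x y < \<epsilon> \<longrightarrow> y \<notin> S)"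

definition Kinv :: "complex list set \<Rightarrow> complex multiset \<Rightarrow> complex list" where
  "Kinv KK V = (THE v. v \<in> KK \<and> P v = V)"

end

theory Submission
  imports Defs
begin

lemma uniform_pos:
  assumes "finite W" "\<forall>w\<in>W. \<exists>e>0. Q w e"
    and "\<And>w e e'. Q w e \<Longrightarrow> 0 < e' \<Longrightarrow> e' \<le> e \<Longrightarrow> Q w e'"
  shows "\<exists>d>(0::real). \<forall>w\<in>W. Q w d"
  using assms(1,2)
proof (induction W rule: finite_induct)
  case empty
  then show ?case by (rule_tac x=1 in exI) auto
next
  case (insert x F)
  then obtain d where d: "d > 0" "\<forall>w\<in>F. Q w d" by auto
  from insert obtain e where e: "e > 0" "Q x e" by auto
  show ?case
    apply (rule exI[of _ "min d e"])
    using d e assms(3)[of _ d "min d e"] assms(3)[of x e "min d e"] by auto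
qed

lemma dinf_less_iff:
  assumes "length u = n" "length v = n" "n > 0"
  shows "dinf u v < r \<longleftrightarrow> (\<forall>j<n. cmod (u ! j - v ! j) < r)"
  using assms unfolding dinf_def by (subst Max_less_iff) auto

lemma dinf_ge:
  assumes "length u = n" "j < n"
  shows "cmod (u ! j - v ! j) \<le> dinf u v"
  using assms unfolding dinf_def by (intro Max_ge) auto

lemma dinf_le_iff:
  assumes "length u = n" "length v = n" "n > 0"
  shows "dinf u v \<le> r \<longleftrightarrow> (\<forall>j<n. cmod (u ! j - v ! j) \<le> r)"
  using assms unfolding dinf_def by (subst Max_le_iff) auto

lemma dinf_sym:
  assumes "length u = n" "length v = n" "n > 0"
  shows "dinf u v = dinf v u"
proof -
  have "dinf u v \<le> dinf v u" using assms
    by (subst dinf_le_iff[OF assms]) (metis dinf_ge norm_minus_commute)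
  moreover have "dinf v u \<le> dinf u v" using assms
    by (subst dinf_le_iff[OF assms(2,1,3)]) (metis dinf_ge norm_minus_commute)
  ultimately show ?thesis by simp
qed

lemma dinf_tri:
  assumes "length u = n" "length v = n" "length w = n" "n > 0"
  shows "dinf u w \<le> dinf u v + dinf v w"
proof (subst dinf_le_iff[OF assms(1,3,4)], intro allI impI)
  fix j assume j: "j < n"
  have "cmod (u ! j - w ! j) \<le> cmod (u ! j - v ! j) + cmod (v ! j - w ! j)"
    using norm_triangle_ineq[of "u ! j - v ! j" "v ! j - w ! j"] by simp
  also have "\<dots> \<le> dinf u v + dinf v w"
    using dinf_ge[OF assms(1) j, of v] dinf_ge[OF assms(2) j, of w] by simp
  finally show "cmod (u ! j - w ! j) \<le> dinf u v + dinf v w" .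
qed

lemma dinf_pos:
  assumes "length u = n" "length v = n" "u \<noteq> v"
  shows "dinf u v > 0"
proof -
  obtain j where j: "j < n" "u ! j \<noteq> v ! j" using assms nth_equalityI by metis
  then have "cmod (u ! j - v ! j) > 0" by simp
  with dinf_ge[OF assms(1) j(1), of v] show ?thesis by linarith
qed

lemma enum_mset: "mset (enum U) = U"
  unfolding enum_def by (rule someI_ex) (metis ex_mset)

lemma finite_perms: "finite {\<tau>. \<tau> permutes {..<n::nat}}"
  by (rule finite_permutations) simp

lemma dF_le_dinf:
  assumes "length x = n" "length y = n" "n > 0"
  shows "dF n (mset x) (mset y) \<le> dinf x y"
proof -
  define ex where "ex = enum (mset x)"
  define ey where "ey = enum (mset y)"
  have mx: "mset ex = mset x" and my: "mset ey = mset y" unfolding ex_def ey_def by (rule enum_mset)+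
  obtain p where p: "p permutes {..<n}" "permute_list p x = ex"
    using mset_eq_permutation[OF mx] assms by metis
  obtain q where q: "q permutes {..<n}" "permute_list q y = ey"
    using mset_eq_permutation[OF my] assms by metis
  have lex: "length ex = n" "length ey = n"
    using mx my assms by (metis size_mset)+
  define \<tau> where "\<tau> = inv q \<circ> p"
  have tau: "\<tau> permutes {..<n}" unfolding \<tau>_def by (intro permutes_compose permutes_inv p q)
  have "dF n (mset x) (mset y) \<le> (MAX j\<in>{..<n}. cmod (ex ! j - ey ! \<tau> j))"
    unfolding dF_def ex_def[symmetric] ey_def[symmetric]
    by (rule Min_le) (use finite_perms tau in auto)
  also have "\<dots> \<le> dinf x y"
  proof -
  have "\<forall>j\<in>{..<n}. cmod (ex ! j - ey ! \<tau> j) \<le> dinf x y"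
  proof
    fix j assume "j \<in> {..<n}"
    then have j: "j < n" by simp
    have pj: "p j < n" using permutes_in_image[OF p(1)] j by simp
    have "ex ! j = x ! p j" using p permute_list_nth[of p x j] assms j by simp
    moreover have "ey ! \<tau> j = y ! p j"
    proof -
      have tj: "\<tau> j < n" using permutes_in_image[OF tau] j by simp
      have "ey ! \<tau> j = y ! q (\<tau> j)" using q permute_list_nth[of q y "\<tau> j"] assms tj by simp
      also have "q (\<tau> j) = p j" unfolding \<tau>_def using permutes_inverses(1)[OF q(1)] by simp
      finally show ?thesis .
    qed
    ultimately show "cmod (ex ! j - ey ! \<tau> j) \<le> dinf x y" using dinf_ge[OF assms(1) pj] by simp
  qed
  then show ?thesis using assms(3) by (subst Max_le_iff) auto
  qed
  finally show ?thesis .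
qed

lemma dF_small_match:
  assumes "length u = n" "mset v = V" "mset u = U" "n > 0" "size V = n" "size U = n"
    and "dF n V U < d"
  shows "\<exists>w. length w = n \<and> mset w = V \<and> dinf w u < d"
proof -
  define eV where "eV = enum V"
  define eU where "eU = enum U"
  have mV: "mset eV = V" and mU: "mset eU = U" unfolding eV_def eU_def by (rule enum_mset)+
  have lV: "length eV = n" and lU: "length eU = n" using mV mU assms by (metis size_mset)+
  obtain \<tau> where tau: "\<tau> permutes {..<n}" and small: "(MAX j\<in>{..<n}. cmod (eV ! j - eU ! \<tau> j)) < d"
  proof -
    have ne: "{\<tau>. \<tau> permutes {..<n}} \<noteq> {}" using permutes_id by blast
    have "Min ((\<lambda>\<tau>. MAX j\<in>{..<n}. cmod (eV ! j - eU ! \<tau> j)) ` {\<tau>. \<tau> permutes {..<n}}) < d"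
      using assms(7) unfolding dF_def eV_def[symmetric] eU_def[symmetric] .
    then have "\<exists>a\<in>(\<lambda>\<tau>. MAX j\<in>{..<n}. cmod (eV ! j - eU ! \<tau> j)) ` {\<tau>. \<tau> permutes {..<n}}. a < d"
      using Min_less_iff[OF finite_imageI[OF finite_perms]] ne by blast
    then show ?thesis using that by blast
  qed
  have small': "\<forall>j<n. cmod (eV ! j - eU ! \<tau> j) < d"
    using small assms(4) by (subst (asm) Max_less_iff) auto
  obtain f where f: "f permutes {..<n}" "permute_list f eU = u"
    using mset_eq_permutation[of u eU] mU assms lU by metis
  define g where "g = inv \<tau> \<circ> f"
  have gp: "g permutes {..<n}" unfolding g_def by (intro permutes_compose permutes_inv f tau)
  define w where "w = permute_list g eV"
  have lw: "length w = n" unfolding w_def using lV by simp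
  have mw: "mset w = V" unfolding w_def using mV lV gp by simp
  have "dinf w u < d"
  proof (subst dinf_less_iff[OF lw assms(1,4)], intro allI impI)
    fix j assume j: "j < n"
    have gj: "g j < n" using permutes_in_image[OF gp] j by simp
    have "w ! j = eV ! g j" unfolding w_def using permute_list_nth[of g eV j] gp lV j by simp
    moreover have "u ! j = eU ! \<tau> (g j)"
    proof -
      have "u ! j = eU ! f j" using f permute_list_nth[of f eU j] lU j by auto
      also have "f j = \<tau> (g j)" unfolding g_def using permutes_inverses(1)[OF tau] by simp
      finally show ?thesis .
    qed
    ultimately show "cmod (w ! j - u ! j) < d" using small' gj by simp
  qed
  with lw mw show ?thesis by blast
qed

theorem theorem4p1:
  fixes n :: nat and KK :: "complex list set"
  assumes "n \<ge> 2"
    and "KK \<subseteq> Cn n"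
    and "\<forall>V\<in>Zn n. \<exists>!v. v \<in> KK \<inter> {u \<in> Cn n. P u = V}"
  shows "metric_continuous (Zn n) (dF n) (Cn n) dinf (Kinv KK) \<longleftrightarrow> metric_closed (Cn n) dinf KK"
proof -
  have n0: "n > 0" using assms(1) by simp
  have Kin: "Kinv KK V \<in> KK \<and> length (Kinv KK V) = n \<and> mset (Kinv KK V) = V" if "size V = n" for V
  proof -
    have "V \<in> Zn n" using that by (simp add: Zn_def)
    then have "\<exists>!v. v \<in> KK \<inter> {u \<in> Cn n. P u = V}" using assms(3) by blast
    then have "\<exists>!v. v \<in> KK \<and> P v = V" using assms(2) by blast
    then have "Kinv KK V \<in> KK \<and> P (Kinv KK V) = V"
      unfolding Kinv_def by (rule theI')
    then have "Kinv KK V \<in> KK \<inter> {u \<in> Cn n. P u = V}" using assms(2) by auto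
    then show ?thesis by (simp add: Cn_def P_def)
  qed
  have Kuniq: "w = Kinv KK V" if "w \<in> KK" "mset w = V" for w V
  proof -
    have lw: "length w = n" using that assms(2) by (auto simp: Cn_def)
    then have sV: "size V = n" using that by auto
    then have "V \<in> Zn n" by (simp add: Zn_def)
    then have "\<exists>!v. v \<in> KK \<inter> {u \<in> Cn n. P u = V}" using assms(3) by blast
    moreover have "w \<in> KK \<inter> {u \<in> Cn n. P u = V}" using that lw by (simp add: Cn_def P_def)
    moreover have "Kinv KK V \<in> KK \<inter> {u \<in> Cn n. P u = V}" using Kin[OF sV] by (simp add: Cn_def P_def)
    ultimately show ?thesis by blast
  qed
  show ?thesis
  proof
    assume cont: "metric_continuous (Zn n) (dF n) (Cn n) dinf (Kinv KK)"
    show "metric_closed (Cn n) dinf KK"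
      unfolding metric_closed_def
    proof (intro conjI assms(2) ballI)
      fix x assume x: "x \<in> Cn n - KK"
      have lx: "length x = n" using x by (simp add: Cn_def)
      define V where "V = mset x"
      have sV: "size V = n" using lx V_def by simp
      define v where "v = Kinv KK V"
      have v: "v \<in> KK" "length v = n" "mset v = V" using Kin[OF sV] v_def by auto
      have vx: "v \<noteq> x" using v x by auto
      define e where "e = dinf v x"
      have e: "e > 0" unfolding e_def using dinf_pos[OF v(2) lx vx] .
      obtain \<delta> where \<delta>: "\<delta> > 0" "\<forall>y\<in>Zn n. dF n V y < \<delta> \<longrightarrow> dinf v (Kinv KK y) < e/2"
      proof -
        have VZ: "V \<in> Zn n" using sV by (simp add: Zn_def)
        have e2: "e/2 > 0" using e by simp
        have "\<forall>x\<in>Zn n. \<forall>\<epsilon>>0. \<exists>\<delta>>0. \<forall>y\<in>Zn n. dF n x y < \<delta> \<longrightarrow> dinf (Kinv KK x) (Kinv KK y) < \<epsilon>"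
          using cont unfolding metric_continuous_def by blast
        then have "\<exists>\<delta>>0. \<forall>y\<in>Zn n. dF n V y < \<delta> \<longrightarrow> dinf (Kinv KK V) (Kinv KK y) < e/2"
          using VZ e2 by blast
        then show ?thesis using that unfolding v_def by blast
      qed
      show "\<exists>\<epsilon>>0. \<forall>y\<in>Cn n. dinf x y < \<epsilon> \<longrightarrow> y \<notin> KK"
      proof (rule exI[of _ "min \<delta> (e/2)"], intro conjI ballI impI)
        show "min \<delta> (e/2) > 0" using \<delta> e by simp
        fix y assume y: "y \<in> Cn n" "dinf x y < min \<delta> (e/2)"
        show "y \<notin> KK"
        proof
          assume yK: "y \<in> KK"
          have ly: "length y = n" using y by (simp add: Cn_def)
          have "dF n V (mset y) \<le> dinf x y" unfolding V_def by (rule dF_le_dinf[OF lx ly n0])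
          then have "dF n V (mset y) < \<delta>" using y by simp
          moreover have "mset y \<in> Zn n" using ly by (simp add: Zn_def)
          ultimately have "dinf v (Kinv KK (mset y)) < e/2" using \<delta> by blast
          moreover have "Kinv KK (mset y) = y" using Kuniq[OF yK refl] by simp
          ultimately have "dinf v y < e/2" by simp
          moreover have "dinf y x < e/2" using y dinf_sym[OF lx ly n0] by simp
          moreover have "e \<le> dinf v y + dinf y x" unfolding e_def by (rule dinf_tri[OF v(2) ly lx n0])
          ultimately show False by simp
        qed
      qed
    qed
  next
    assume cl: "metric_closed (Cn n) dinf KK"
    show "metric_continuous (Zn n) (dF n) (Cn n) dinf (Kinv KK)"
      unfolding metric_continuous_def
    proof (intro conjI ballI allI impI)
      fix V assume "V \<in> Zn n"
      then show "Kinv KK V \<in> Cn n" using Kin by (simp add: Zn_def Cn_def)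
    next
      fix V and \<epsilon> :: real assume V: "V \<in> Zn n" and eps: "\<epsilon> > 0"
      have sV: "size V = n" using V by (simp add: Zn_def)
      define v where "v = Kinv KK V"
      have v: "v \<in> KK" "length v = n" "mset v = V" using Kin[OF sV] v_def by auto
      define W where "W = {w \<in> Cn n. mset w = V} - KK"
      have finW: "finite W"
      proof -
        have "W \<subseteq> {xs. set xs \<subseteq> set_mset V \<and> length xs = n}"
          unfolding W_def Cn_def by auto
        moreover have "finite {xs. set xs \<subseteq> set_mset V \<and> length xs = n}"
          by (rule finite_lists_length_eq) simp
        ultimately show ?thesis by (rule finite_subset)
      qed
      have "\<exists>d>(0::real). \<forall>w\<in>W. \<forall>y\<in>Cn n. dinf w y < d \<longrightarrow> y \<notin> KK"
      proof (rule uniform_pos[OF finW])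
        show "\<forall>w\<in>W. \<exists>e>0. \<forall>y\<in>Cn n. dinf w y < e \<longrightarrow> y \<notin> KK"
        proof
          fix w assume "w \<in> W"
          then have "w \<in> Cn n - KK" unfolding W_def by simp
          then show "\<exists>e>0. \<forall>y\<in>Cn n. dinf w y < e \<longrightarrow> y \<notin> KK"
            using cl unfolding metric_closed_def by simp
        qed
      next
        fix w and e e' :: real
        assume "\<forall>y\<in>Cn n. dinf w y < e \<longrightarrow> y \<notin> KK" "0 < e'" "e' \<le> e"
        then show "\<forall>y\<in>Cn n. dinf w y < e' \<longrightarrow> y \<notin> KK" by auto
      qed
      then obtain d where d: "d > 0" "\<forall>w\<in>W. \<forall>y\<in>Cn n. dinf w y < d \<longrightarrow> y \<notin> KK" by blast
      show "\<exists>\<delta>>0. \<forall>y\<in>Zn n. dF n V y < \<delta> \<longrightarrow> dinf (Kinv KK V) (Kinv KK y) < \<epsilon>"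
      proof (rule exI[of _ "min d \<epsilon>"], intro conjI ballI impI)
        show "min d \<epsilon> > 0" using d eps by simp
        fix U assume U: "U \<in> Zn n" "dF n V U < min d \<epsilon>"
        have sU: "size U = n" using U by (simp add: Zn_def)
        define u where "u = Kinv KK U"
        have u: "u \<in> KK" "length u = n" "mset u = U" using Kin[OF sU] u_def by auto
        obtain w where w: "length w = n" "mset w = V" "dinf w u < min d \<epsilon>"
          using dF_small_match[OF u(2) v(3) u(3) n0 sV sU U(2)] by blast
        have "w \<in> KK"
        proof (rule ccontr)
          assume "w \<notin> KK"
          then have "w \<in> W" using w unfolding W_def Cn_def by auto
          moreover have "u \<in> Cn n" using u by (simp add: Cn_def)
          ultimately have "u \<notin> KK" using d(2) w(3) by simp
          then show False using u(1) by simp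
        qed
        then have "w = v" using Kuniq[OF _ w(2)] v_def by simp
        then show "dinf (Kinv KK V) (Kinv KK U) < \<epsilon>" using w v_def u_def by simp
      qed
    qed
  qed
qed

end
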